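(* Let $n\ge2$, let $v_1,\dots,v_n$ be the standard unit vectors of $\mathbb R^n$ and $v_0=-\sum_{i=1}^nv_i$. For $i=0,\dots,n$ let $\ell_i>0$ and let $e_i$ be the segment from $0$ to $\ell_iv_i$. Let $f_i\colon e_i\to\mathbb R$ be smooth functions (one-sidedly smooth at the endpoints) with $f_0(0)=f_1(0)=\dots=f_n(0)$ and $\sum_{i=0}^n\frac{\partial f_i}{\partial v_i}(0)=0$, where $\frac{\partial}{\partial v_i}$ is the directional derivative. Then there exists a smooth function $f\colon\mathbb R^n\to\mathbb R$ with $f|_{e_i}=f_i$ for all $i$. *)

theory Defs
  imports "HOL-Analysis.Analysis"
begin

text \<open>C-infinity functions on a real normed vector space: differentiable everywhere, and every
  directional derivative function is again C-infinity (coinductively, i.e. to all orders).\<close>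
coinductive smooth_fun :: "('a::real_normed_vector \<Rightarrow> real) \<Rightarrow> bool" where
  "(\<forall>x. f differentiable (at x)) \<Longrightarrow>
   (\<forall>v. smooth_fun (\<lambda>x. frechet_derivative f (at x) v)) \<Longrightarrow> smooth_fun f"

definition smooth_on_interval :: "(real \<Rightarrow> real) \<Rightarrow> real \<Rightarrow> real \<Rightarrow> bool" where
  "smooth_on_interval g a b \<longleftrightarrow>
     (\<exists>D :: nat \<Rightarrow> real \<Rightarrow> real. (\<forall>x\<in>{a..b}. D 0 x = g x) \<and>
        (\<forall>k. \<forall>x\<in>{a..b}. (D k has_real_derivative D (Suc k) x) (at x within {a..b})))"

end

theory Submission
  imports Defs "HOL-Computational_Algebra.Polynomial"
begin
definition smooth1 :: "(real \<Rightarrow> real) \<Rightarrow> bool" where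
  "smooth1 g \<longleftrightarrow> (\<exists>D. D 0 = g \<and> (\<forall>k x. (D k has_real_derivative D (Suc k) x) (at x)))"

lemma smooth_fun_D:
  assumes "smooth_fun f"
  shows "f differentiable at x" "smooth_fun (\<lambda>x. frechet_derivative f (at x) v)"
  using assms by (auto elim: smooth_fun.cases)

lemma smooth_fun_const: "smooth_fun (\<lambda>x. c)"
proof (coinduction arbitrary: c rule: smooth_fun.coinduct)
  case (smooth_fun c)
  have "frechet_derivative (\<lambda>x. c) (at x) = (\<lambda>v. 0)" for x :: 'a
    by (rule frechet_derivative_at[symmetric]) (rule has_derivative_const)
  then show ?case by (auto intro: exI[of _ 0])
qed

lemma sum_list_concat_map2:
  "(\<Sum>q\<leftarrow>concat (map g ps). F q) = (\<Sum>p\<leftarrow>ps. \<Sum>q\<leftarrow>g p. F q)"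
  by (induction ps) auto

lemma sumprod_has_derivative:
  assumes "\<forall>p\<in>set ps. smooth_fun (fst p) \<and> smooth_fun (snd p)"
  shows "((\<lambda>x. \<Sum>p\<leftarrow>ps. fst p x * snd p x) has_derivative
     (\<lambda>v. \<Sum>p\<leftarrow>ps. frechet_derivative (fst p) (at x) v * snd p x + fst p x * frechet_derivative (snd p) (at x) v)) (at x)"
  using assms
proof (induction ps)
  case Nil
  then show ?case by (simp add: has_derivative_const)
next
  case (Cons p ps)
  have f: "(fst p has_derivative frechet_derivative (fst p) (at x)) (at x)"
    using Cons.prems by (auto intro: frechet_derivative_works[THEN iffD1] smooth_fun_D)
  have g: "(snd p has_derivative frechet_derivative (snd p) (at x)) (at x)"
    using Cons.prems by (auto intro: frechet_derivative_works[THEN iffD1] smooth_fun_D)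
  have "((\<lambda>x. fst p x * snd p x + (\<Sum>p\<leftarrow>ps. fst p x * snd p x)) has_derivative
     (\<lambda>v. (fst p x * frechet_derivative (snd p) (at x) v + frechet_derivative (fst p) (at x) v * snd p x) +
       (\<Sum>p\<leftarrow>ps. frechet_derivative (fst p) (at x) v * snd p x + fst p x * frechet_derivative (snd p) (at x) v))) (at x)"
    by (intro has_derivative_add has_derivative_mult f g Cons.IH) (use Cons.prems in auto)
  then show ?case by (simp add: algebra_simps)
qed

lemma smooth_fun_sumprod:
  assumes "\<forall>p\<in>set ps. smooth_fun (fst p) \<and> smooth_fun (snd p)"
  shows "smooth_fun (\<lambda>x. \<Sum>p\<leftarrow>ps. fst p x * snd p x)"
  using assms
proof (coinduction arbitrary: ps rule: smooth_fun.coinduct)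
  case (smooth_fun ps)
  note D = sumprod_has_derivative[OF smooth_fun]
  have fd: "frechet_derivative (\<lambda>x. \<Sum>p\<leftarrow>ps. fst p x * snd p x) (at x) =
     (\<lambda>v. \<Sum>p\<leftarrow>ps. frechet_derivative (fst p) (at x) v * snd p x + fst p x * frechet_derivative (snd p) (at x) v)" for x
    using frechet_derivative_at[OF D[of x]] by simp
  have "\<exists>ps'. (\<forall>p\<in>set ps'. smooth_fun (fst p) \<and> smooth_fun (snd p)) \<and>
      (\<lambda>x. frechet_derivative (\<lambda>x. \<Sum>p\<leftarrow>ps. fst p x * snd p x) (at x) v) = (\<lambda>x. \<Sum>p\<leftarrow>ps'. fst p x * snd p x)" for v
  proof (intro exI conjI)
    let ?g = "\<lambda>p. [((\<lambda>x. frechet_derivative (fst p) (at x) v), snd p), (fst p, (\<lambda>x. frechet_derivative (snd p) (at x) v))]"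
    show "\<forall>p\<in>set (concat (map ?g ps)). smooth_fun (fst p) \<and> smooth_fun (snd p)"
      using smooth_fun by (auto intro: smooth_fun_D)
    show "(\<lambda>x. frechet_derivative (\<lambda>x. \<Sum>p\<leftarrow>ps. fst p x * snd p x) (at x) v) = (\<lambda>x. \<Sum>p\<leftarrow>concat (map ?g ps). fst p x * snd p x)"
      unfolding fd sum_list_concat_map2 by simp
  qed
  moreover have "\<forall>x. (\<lambda>x. \<Sum>p\<leftarrow>ps. fst p x * snd p x) differentiable at x"
    using D by (auto simp: differentiable_def)
  ultimately show ?case by blast
qed

lemma smooth_fun_mult: "smooth_fun f \<Longrightarrow> smooth_fun g \<Longrightarrow> smooth_fun (\<lambda>x. f x * g x)"
  using smooth_fun_sumprod[of "[(f,g)]"] by simp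

lemma smooth_fun_add: "smooth_fun f \<Longrightarrow> smooth_fun g \<Longrightarrow> smooth_fun (\<lambda>x. f x + g x)"
  using smooth_fun_sumprod[of "[(f,\<lambda>x. 1),(g,\<lambda>x. 1)]"] by (simp add: smooth_fun_const)

lemma smooth_fun_sum: "finite I \<Longrightarrow> (\<And>i. i \<in> I \<Longrightarrow> smooth_fun (f i)) \<Longrightarrow> smooth_fun (\<lambda>x. \<Sum>i\<in>I. f i x)"
  by (induction I rule: finite_induct) (auto intro: smooth_fun_add smooth_fun_const)

lemma smooth1_comp_linear:
  assumes "smooth1 \<phi>" "bounded_linear L"
  shows "smooth_fun (\<lambda>x. \<phi> (L x))"
  using assms
proof (coinduction arbitrary: \<phi> rule: smooth_fun.coinduct)
  case (smooth_fun \<phi>)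
  then obtain D where D0: "D 0 = \<phi>" and D: "\<And>k x. (D k has_real_derivative D (Suc k) x) (at x)"
    unfolding smooth1_def by blast
  have hd: "((\<lambda>x. \<phi> (L x)) has_derivative (\<lambda>v. D 1 (L x) * L v)) (at x)" for x
  proof -
    have "((D 0 \<circ> L) has_derivative ((*) (D 1 (L x)) \<circ> L)) (at x)"
      using diff_chain_at[OF bounded_linear_imp_has_derivative[OF smooth_fun(2)] D[of 0 "L x", unfolded has_field_derivative_def]]
      by simp
    then show ?thesis using D0 by (simp add: o_def)
  qed
  have "smooth1 (\<lambda>t. L v * D 1 t)" for v
    unfolding smooth1_def
    by (rule exI[of _ "\<lambda>k t. L v * D (Suc k) t"]) (auto intro: DERIV_cmult D)
  moreover have "(\<lambda>x. frechet_derivative (\<lambda>x. \<phi> (L x)) (at x) v) = (\<lambda>x. L v * D 1 (L x))" for v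
    using frechet_derivative_at[OF hd] by (auto simp: fun_eq_iff mult.commute)
  ultimately show ?case using hd smooth_fun(2) by (auto simp: differentiable_def)
qed

lemma gauss_poly_deriv:
  "((\<lambda>s. poly p s * exp (-(s^2))) has_real_derivative
     poly (pderiv p - [:0,2:] * p) s * exp (-(s^2))) (at s)"
proof -
  have "((\<lambda>s. poly p s * exp (-(s^2))) has_real_derivative
     poly (pderiv p) s * exp (-(s^2)) + poly p s * (exp (-(s^2)) * (- (2 * s)))) (at s)"
    by (auto intro!: derivative_eq_intros simp: power2_eq_square)
  then show ?thesis by (simp add: algebra_simps)
qed

lemma poly_bound_pow:
  fixes p :: "real poly"
  shows "\<bar>poly p s\<bar> \<le> (\<Sum>i\<le>degree p. \<bar>coeff p i\<bar>) * (1 + s^2) ^ degree p"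
proof -
  have "\<bar>poly p s\<bar> \<le> (\<Sum>i\<le>degree p. \<bar>coeff p i * s ^ i\<bar>)"
    unfolding poly_altdef by (rule sum_abs)
  also have "\<dots> \<le> (\<Sum>i\<le>degree p. \<bar>coeff p i\<bar> * (1 + s^2) ^ degree p)"
  proof (rule sum_mono)
    fix i assume i: "i \<in> {..degree p}"
    have "\<bar>s\<bar> \<le> 1 + s^2"
    proof -
      have "0 \<le> (\<bar>s\<bar> - 1)^2" by simp
      then have "0 \<le> \<bar>s\<bar>^2 - 2 * \<bar>s\<bar> + 1" by (simp add: power2_diff)
      then show ?thesis by simp
    qed
    then have "\<bar>s\<bar> ^ i \<le> (1 + s^2) ^ i" by (intro power_mono) auto
    also have "\<dots> \<le> (1 + s^2) ^ degree p" using i by (intro power_increasing) auto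
    finally show "\<bar>coeff p i * s ^ i\<bar> \<le> \<bar>coeff p i\<bar> * (1 + s^2) ^ degree p"
      by (auto simp: abs_mult power_abs intro: mult_left_mono)
  qed
  finally show ?thesis by (simp add: sum_distrib_right)
qed

lemma pow_exp_bound:
  fixes s :: real
  shows "(1 + s^2) ^ d \<le> (real d + 1) ^ (d + 1) * exp (s^2)"
proof -
  define n where "n = d + 1"
  have n: "n > 0" by (simp add: n_def)
  have "(1 + s^2) ^ d \<le> (1 + s^2) ^ n" by (intro power_increasing) (auto simp: n_def)
  also have "1 + s^2 \<le> real n * (1 + s^2 / real n)" using n by (simp add: field_simps)
  then have "(1 + s^2) ^ n \<le> (real n * (1 + s^2 / real n)) ^ n"
    by (intro power_mono) (auto simp: add_nonneg_nonneg)
  also have "(real n * (1 + s^2 / real n)) ^ n = real n ^ n * (1 + s^2 / real n) ^ n"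
    by (simp add: power_mult_distrib)
  also have "\<dots> \<le> real n ^ n * exp (s^2)"
  proof -
    have "0 \<le> s^2" "0 \<le> real n" by auto
    then have "- real n \<le> s^2" by linarith
    then show ?thesis by (intro mult_left_mono exp_ge_one_plus_x_over_n_power_n) (use n in auto)
  qed
  finally have A: "(1 + s^2) ^ d \<le> real n ^ n * exp (s^2)" .
  then show ?thesis by (simp add: n_def add.commute)
qed

lemma gauss_poly_bounded:
  fixes p :: "real poly"
  shows "\<exists>M. \<forall>s. \<bar>poly p s * exp (-(s^2))\<bar> \<le> M"
proof -
  define C where "C = (\<Sum>i\<le>degree p. \<bar>coeff p i\<bar>)"
  have C: "C \<ge> 0" unfolding C_def by (auto intro: sum_nonneg)
  have "\<bar>poly p s * exp (-(s^2))\<bar> \<le> C * (real (degree p) + 1) ^ (degree p + 1)" for s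
  proof -
    have "\<bar>poly p s * exp (-(s^2))\<bar> = \<bar>poly p s\<bar> * exp (-(s^2))" by (simp add: abs_mult)
    also have "\<dots> \<le> (C * (1 + s^2) ^ degree p) * exp (-(s^2))"
      by (intro mult_right_mono poly_bound_pow[of p s, folded C_def]) auto
    also have "\<dots> \<le> (C * ((real (degree p) + 1) ^ (degree p + 1) * exp (s^2))) * exp (-(s^2))"
      by (intro mult_right_mono mult_left_mono pow_exp_bound C) auto
    also have "\<dots> = C * (real (degree p) + 1) ^ (degree p + 1)"
      by (simp add: exp_minus field_simps)
    finally show ?thesis .
  qed
  then show ?thesis by blast
qed

fun gP :: "nat \<Rightarrow> nat \<Rightarrow> real poly" where
  "gP k 0 = monom 1 k"
| "gP k (Suc j) = pderiv (gP k j) - [:0,2:] * gP k j"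

definition gD :: "nat \<Rightarrow> nat \<Rightarrow> real \<Rightarrow> real" where
  "gD k j s = poly (gP k j) s * exp (-(s^2))"

lemma gD_deriv: "(gD k j has_real_derivative gD k (Suc j) s) (at s)"
  unfolding gD_def gP.simps by (rule gauss_poly_deriv)

lemma gD_bounded: "\<exists>M. \<forall>s. \<bar>gD k j s\<bar> \<le> M"
  unfolding gD_def by (rule gauss_poly_bounded)

lemma gP_factor:
  "m \<le> k \<Longrightarrow> \<exists>q. gP k m = monom 1 (k - m) * q \<and> poly q 0 = fact k / fact (k - m)"
proof (induction m)
  case 0
  then show ?case by (auto intro: exI[of _ 1])
next
  case (Suc m)
  then obtain q where q: "gP k m = monom 1 (k - m) * q" "poly q 0 = fact k / fact (k - m)" by auto
  define r where "r = k - m - 1"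
  have r: "k - m = Suc r" using Suc.prems by (simp add: r_def)
  have mr: "monom (1::real) (Suc r) = monom 1 r * [:0,1:]"
    by (simp add: monom_Suc pCons_one monom_altdef power_Suc2 mult.assoc)
  have pd: "pderiv (monom (1::real) (Suc r)) = smult (real (Suc r)) (monom 1 r)"
    by (simp add: pderiv_monom smult_monom)
  define q' where "q' = [:0,1:] * pderiv q + smult (real (Suc r)) q - [:0,2:] * [:0,1:] * q"
  have "gP k (Suc m) = monom 1 r * q'"
    unfolding gP.simps q r q'_def pderiv_mult pd
    by (simp add: mr algebra_simps)
  moreover have "poly q' 0 = fact k / fact (k - Suc m)"
  proof -
    have "poly q' 0 = real (Suc r) * poly q 0" by (simp add: q'_def)
    also have "\<dots> = real (Suc r) * (fact k / fact (Suc r))" using q(2) r by simp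
    also have "\<dots> = fact k / fact r"
    proof -
      have f: "(fact (Suc r)::real) = real (Suc r) * fact r" by (simp del: of_nat_Suc)
      have "real (Suc r) \<noteq> 0" by simp
      then show ?thesis unfolding f times_divide_eq_right by (rule mult_divide_mult_cancel_left)
    qed
    moreover have kr: "k - Suc m = r" using r by simp
    ultimately show ?thesis by simp
  qed
  moreover have "k - Suc m = r" using r by simp
  ultimately show ?case by auto
qed

lemma gP_zero: "m < k \<Longrightarrow> poly (gP k m) 0 = 0"
  using gP_factor[of m k] by (auto simp: poly_monom)

lemma gP_diag: "poly (gP k k) 0 = fact k"
  using gP_factor[of k k] by auto

definition TD :: "real \<Rightarrow> real \<Rightarrow> nat \<Rightarrow> nat \<Rightarrow> real \<Rightarrow> real" where
  "TD c l k j t = c * (l ^ j / l ^ k) * gD k j (l * t)"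

lemma TD_deriv: "(TD c l k j has_real_derivative TD c l k (Suc j) t) (at t)"
proof -
  have "((\<lambda>t. c * (l ^ j / l ^ k) * gD k j (l * t)) has_real_derivative
      c * (l ^ j / l ^ k) * (gD k (Suc j) (l * t) * l)) (at t)"
    by (intro DERIV_cmult DERIV_chain2[OF gD_deriv]) (auto intro!: derivative_eq_intros)
  then show ?thesis unfolding TD_def by (simp add: field_simps)
qed

lemma TD_zero: "j < k \<Longrightarrow> TD c l k j 0 = 0"
  by (simp add: TD_def gD_def gP_zero)

lemma TD_diag: "l \<noteq> 0 \<Longrightarrow> TD c l k k 0 = c * fact k"
  by (simp add: TD_def gD_def gP_diag)

definition Mb :: "nat \<Rightarrow> nat \<Rightarrow> real" where
  "Mb k j = (SOME M. \<forall>s. \<bar>gD k j s\<bar> \<le> M)"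

lemma Mb_bound: "\<bar>gD k j s\<bar> \<le> Mb k j"
  using someI_ex[OF gD_bounded[of k j]] unfolding Mb_def by blast

lemma Mb_nonneg: "0 \<le> Mb k j"
  using Mb_bound[of k j 0] by linarith

lemma TD_bound:
  assumes "j < k" "l \<ge> 1"
  shows "\<bar>TD c l k j t\<bar> \<le> \<bar>c\<bar> / l * Mb k j"
proof -
  have l0: "l > 0" using assms by simp
  have lk: "l ^ j / l ^ k = 1 / l ^ (k - j)" using assms l0 by (simp add: power_diff)
  have "l ^ 1 \<le> l ^ (k - j)" using assms by (intro power_increasing) auto
  then have "1 / l ^ (k - j) \<le> 1 / l" using l0 by (intro divide_left_mono) auto
  then have A: "l ^ j / l ^ k \<le> 1 / l" unfolding lk .
  have B: "0 \<le> l ^ j / l ^ k" using l0 by simp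
  have "\<bar>TD c l k j t\<bar> = \<bar>c\<bar> * (l ^ j / l ^ k) * \<bar>gD k j (l * t)\<bar>"
    unfolding TD_def abs_mult abs_divide using l0 by (simp add: abs_of_pos)
  also have "\<dots> \<le> \<bar>c\<bar> * (1 / l) * Mb k j"
    using l0 by (intro mult_mono mult_left_mono A Mb_bound) (auto simp: Mb_nonneg B)
  finally show ?thesis by simp
qed

function cl :: "(nat \<Rightarrow> real) \<Rightarrow> nat \<Rightarrow> real \<times> real" where
  "cl a m = (let c = (a m - (\<Sum>k<m. TD (fst (cl a k)) (snd (cl a k)) k m 0)) / fact m
             in (c, 1 + \<bar>c\<bar> * (\<Sum>j<m. Mb m j) * 2 ^ m))"
  by pat_completeness auto
termination by (relation "Wellfounded.measure (\<lambda>(a,m). m)") auto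

declare cl.simps[simp del]

lemma cl_l_ge1: "snd (cl a m) \<ge> 1"
  by (subst cl.simps) (auto simp: Let_def intro!: divide_nonneg_nonneg mult_nonneg_nonneg sum_nonneg Mb_nonneg)

lemma cl_c: "fst (cl a m) * fact m = a m - (\<Sum>k<m. TD (fst (cl a k)) (snd (cl a k)) k m 0)"
  by (subst cl.simps) (simp add: Let_def)

lemma cl_small:
  assumes "j < m"
  shows "\<bar>fst (cl a m)\<bar> / snd (cl a m) * Mb m j \<le> (1/2) ^ m"
proof -
  define c where "c = fst (cl a m)"
  define S where "S = (\<Sum>j<m. Mb m j)"
  have l: "snd (cl a m) = 1 + \<bar>c\<bar> * S * 2 ^ m"
    unfolding c_def S_def by (simp only: cl.simps[of a m] Let_def) simp
  have S: "Mb m j \<le> S" "0 \<le> S" unfolding S_def using assms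
    by (auto intro!: member_le_sum sum_nonneg Mb_nonneg)
  have pos: "0 < 1 + \<bar>c\<bar> * S * 2 ^ m" using S by (simp add: add_pos_nonneg)
  have "\<bar>c\<bar> * Mb m j * 2 ^ m \<le> \<bar>c\<bar> * S * 2 ^ m" using S by (intro mult_left_mono mult_right_mono) auto
  also have "\<dots> \<le> 1 + \<bar>c\<bar> * S * 2 ^ m" by simp
  finally have A: "\<bar>c\<bar> * Mb m j * 2 ^ m \<le> 1 + \<bar>c\<bar> * S * 2 ^ m" .
  define L where "L = 1 + \<bar>c\<bar> * S * 2 ^ m"
  have pos2: "(0::real) < 2 ^ m" by simp
  have "\<bar>c\<bar> * Mb m j = (\<bar>c\<bar> * Mb m j * 2 ^ m) * (1 / 2 ^ m)" using pos2 by simp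
  also have "\<dots> \<le> L * (1 / 2 ^ m)" using A unfolding L_def by (rule mult_right_mono) simp
  finally have B: "\<bar>c\<bar> * Mb m j \<le> (1 / 2 ^ m) * L" by (simp only: mult.commute)
  have "\<bar>c\<bar> * Mb m j / L \<le> 1 / 2 ^ m"
    using B pos unfolding L_def[symmetric] by (simp only: pos_divide_le_eq)
  then have "\<bar>c\<bar> / (1 + \<bar>c\<bar> * S * 2 ^ m) * Mb m j \<le> (1/2) ^ m"
    unfolding L_def power_one_over by simp
  then show ?thesis unfolding l c_def[symmetric] .
qed

lemma borel_lemma:
  fixes a :: "nat \<Rightarrow> real"
  shows "\<exists>D. (\<forall>k t. (D k has_real_derivative D (Suc k) t) (at t)) \<and> (\<forall>k. D k 0 = a k)"
proof -
  define c where "c k = fst (cl a k)" for k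
  define l where "l k = snd (cl a k)" for k
  define D where "D j t = (\<Sum>k. TD (c k) (l k) k j t)" for j t
  have l1: "l k \<ge> 1" for k unfolding l_def by (rule cl_l_ge1)
  have unif: "uniform_limit UNIV (\<lambda>n t. \<Sum>k<n. TD (c k) (l k) k j t) (D j) sequentially" for j
    unfolding D_def
  proof (rule Weierstrass_m_test_ev)
    show "\<forall>\<^sub>F n in sequentially. \<forall>t\<in>UNIV. norm (TD (c n) (l n) n j t) \<le> (1/2) ^ n"
      unfolding eventually_sequentially
    proof (intro exI allI impI ballI)
      fix n t assume "Suc j \<le> n"
      then have jn: "j < n" by simp
      have "\<bar>TD (c n) (l n) n j t\<bar> \<le> \<bar>c n\<bar> / l n * Mb n j" by (rule TD_bound[OF jn l1])
      also have "\<dots> \<le> (1/2) ^ n" unfolding c_def l_def by (rule cl_small[OF jn])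
      finally show "norm (TD (c n) (l n) n j t) \<le> (1/2) ^ n" by simp
    qed
    show "summable (\<lambda>n. (1/2::real) ^ n)" by simp
  qed
  have summ: "summable (\<lambda>k. TD (c k) (l k) k j t)" for j t
  proof -
    have "(\<lambda>n. \<Sum>k<n. TD (c k) (l k) k j t) \<longlonglongrightarrow> D j t"
      using tendsto_uniform_limitI[OF unif[of j], of t] by simp
    then show ?thesis unfolding summable_def sums_def by blast
  qed
  have deriv: "(D j has_real_derivative D (Suc j) t) (at t)" for j t
  proof -
    have "((\<lambda>t. \<Sum>n. TD (c n) (l n) n j t) has_real_derivative (\<Sum>n. TD (c n) (l n) n (Suc j) t)) (at t)"
    proof (rule has_field_derivative_series'(2)[where S=UNIV and f="\<lambda>n t. TD (c n) (l n) n j t" and f'="\<lambda>n t. TD (c n) (l n) n (Suc j) t"])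
      show "uniformly_convergent_on UNIV (\<lambda>n t. \<Sum>k<n. TD (c k) (l k) k (Suc j) t)"
        using unif[of "Suc j"] unfolding uniformly_convergent_on_def by blast
    qed (auto intro: TD_deriv summ)
    then show ?thesis unfolding D_def .
  qed
  have jet: "D j 0 = a j" for j
  proof -
    have "D j 0 = (\<Sum>k<Suc j. TD (c k) (l k) k j 0)"
      unfolding D_def by (rule suminf_finite) (auto simp: TD_zero)
    also have "\<dots> = (\<Sum>k<j. TD (c k) (l k) k j 0) + c j * fact j"
      using l1[of j] by (simp add: TD_diag)
    also have "\<dots> = a j" unfolding c_def l_def using cl_c[of a j] by simp
    finally show ?thesis .
  qed
  show ?thesis using deriv jet by blast
qed

lemma deriv_glue:
  assumes "(f has_field_derivative d) (at x within S)" "(f has_field_derivative d) (at x within T)"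
    "x \<in> interior (S \<union> T)"
  shows "(f has_field_derivative d) (at x)"
proof -
  have "(f has_field_derivative d) (at x within (S \<union> T))"
    using assms(1,2) unfolding has_field_derivative_iff by (simp add: Lim_within_Un)
  then show ?thesis using at_within_interior[OF assms(3)] by simp
qed

lemma borel_at:
  fixes a :: "nat \<Rightarrow> real"
  shows "\<exists>B. (\<forall>k t. (B k has_real_derivative B (Suc k) t) (at t)) \<and> (\<forall>k. B k p = a k)"
proof -
  obtain B where B: "\<And>k t. (B k has_real_derivative B (Suc k) t) (at t)" "\<And>k. B k 0 = a k"
    using borel_lemma[of a] by blast
  have "((\<lambda>t. B k (t - p)) has_real_derivative B (Suc k) (t - p)) (at t)" for k t
  proof -
    have "((\<lambda>t. t - p) has_real_derivative 1) (at t)" by (auto intro!: derivative_eq_intros)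
    from DERIV_chain2[OF B(1) this, of k] show ?thesis by simp
  qed
  then show ?thesis using B(2) by (intro exI[of _ "\<lambda>k t. B k (t - p)"]) auto
qed

lemma extend_interval:
  assumes ab: "a < b"
    and D: "\<And>k x. x \<in> {a..b} \<Longrightarrow> (D k has_real_derivative D (Suc k) x) (at x within {a..b})"
  shows "\<exists>E. (\<forall>k x. (E k has_real_derivative E (Suc k) x) (at x)) \<and> (\<forall>k. \<forall>x\<in>{a..b}. E k x = D k x)"
proof -
  obtain Ba where Ba: "\<And>k t. (Ba k has_real_derivative Ba (Suc k) t) (at t)" "\<And>k. Ba k a = D k a"
    using borel_at[where a="\<lambda>k. D k a" and p=a] by blast
  obtain Bb where Bb: "\<And>k t. (Bb k has_real_derivative Bb (Suc k) t) (at t)" "\<And>k. Bb k b = D k b"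
    using borel_at[where a="\<lambda>k. D k b" and p=b] by blast
  define E where "E k t = (if t < a then Ba k t else if t \<le> b then D k t else Bb k t)" for k t
  have "(E k has_real_derivative E (Suc k) t) (at t)" for k t
  proof -
    consider "t < a" | "t = a" | "a < t" "t < b" | "t = b" | "b < t" by linarith
    then show ?thesis
    proof cases
      case 1
      have e: "E (Suc k) t = Ba (Suc k) t" using 1 by (simp add: E_def)
      show ?thesis unfolding e
        by (rule has_field_derivative_transform_within_open[OF Ba(1), of "{..<a}"])
           (use 1 in \<open>auto simp: E_def\<close>)
    next
      case 5
      have e: "E (Suc k) t = Bb (Suc k) t" using 5 ab by (simp add: E_def)
      show ?thesis unfolding e
        by (rule has_field_derivative_transform_within_open[OF Bb(1), of "{b<..}"])
           (use 5 ab in \<open>auto simp: E_def\<close>)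
    next
      case 3
      have dk: "(D k has_real_derivative D (Suc k) t) (at t)"
        using D[of t k] 3 at_within_interior[of t "{a..b}"] by auto
      have e: "E (Suc k) t = D (Suc k) t" using 3 by (simp add: E_def)
      show ?thesis unfolding e
        by (rule has_field_derivative_transform_within_open[OF dk, of "{a<..<b}"])
           (use 3 in \<open>auto simp: E_def\<close>)
    next
      case 2
      have h1: "(E k has_real_derivative E (Suc k) t) (at t within {..a})"
      proof (rule has_field_derivative_transform_within[of "Ba k" _ _ _ 1])
        show "(Ba k has_real_derivative E (Suc k) t) (at t within {..a})"
          using Ba(1)[of k t] 2 ab by (auto simp: E_def Ba(2) intro: has_field_derivative_at_within)
      qed (use 2 ab in \<open>auto simp: E_def Ba(2)\<close>)
      have h2: "(E k has_real_derivative E (Suc k) t) (at t within {a..b})"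
      proof (rule has_field_derivative_transform_within[of "D k" _ _ _ 1])
        show "(D k has_real_derivative E (Suc k) t) (at t within {a..b})"
          using D[of t k] 2 ab by (auto simp: E_def)
      qed (use 2 ab in \<open>auto simp: E_def\<close>)
      have "{..a} \<union> {a..b} = {..b}" using ab by auto
      then have "t \<in> interior ({..a} \<union> {a..b})" using 2 ab by simp
      then show ?thesis by (rule deriv_glue[OF h1 h2])
    next
      case 4
      have h1: "(E k has_real_derivative E (Suc k) t) (at t within {a..b})"
      proof (rule has_field_derivative_transform_within[of "D k" _ _ _ 1])
        show "(D k has_real_derivative E (Suc k) t) (at t within {a..b})"
          using D[of t k] 4 ab by (auto simp: E_def)
      qed (use 4 ab in \<open>auto simp: E_def\<close>)
      have h2: "(E k has_real_derivative E (Suc k) t) (at t within {b..})"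
      proof (rule has_field_derivative_transform_within[of "Bb k" _ _ _ 1])
        show "(Bb k has_real_derivative E (Suc k) t) (at t within {b..})"
          using Bb(1)[of k t] 4 ab by (auto simp: E_def Bb(2) intro: has_field_derivative_at_within)
      qed (use 4 ab in \<open>auto simp: E_def Bb(2)\<close>)
      have "{a..b} \<union> {b..} = {a..}" using ab by auto
      then have "t \<in> interior ({a..b} \<union> {b..})" using 4 ab by simp
      then show ?thesis by (rule deriv_glue[OF h1 h2])
    qed
  qed
  moreover have "\<forall>k. \<forall>x\<in>{a..b}. E k x = D k x" by (auto simp: E_def)
  ultimately show ?thesis by blast
qed

lemma cont_of_derivs:
  assumes "\<And>k x. (D k has_real_derivative D (Suc k) x) (at x)"
  shows "continuous_on UNIV (D k)"
  using assms by (intro continuous_at_imp_continuous_on ballI) (auto intro: DERIV_isCont)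

lemma division_lemma:
  assumes D: "\<And>k x. (D k has_real_derivative D (Suc k) x) (at x)"
    and z0: "D 0 0 = 0" and z1: "D 1 0 = 0"
  shows "\<exists>K. (\<forall>k x. (K k has_real_derivative K (Suc k) x) (at x)) \<and> (\<forall>t. D 0 t = t^2 * K 0 t)"
proof -
  define K where "K k t = integral {0..1} (\<lambda>s. (1 - s) * s ^ k * D (k + 2) (s * t))" for k t
  have cD: "continuous_on UNIV (D j)" for j by (rule cont_of_derivs[of D]) (rule D)
  have cont: "continuous_on (UNIV \<times> {0..1}) (\<lambda>(x, s). (1 - s) * s ^ m * D j (s * x))" for m j
  proof -
    have "continuous_on (UNIV \<times> {0..1::real}) (\<lambda>p. D j (snd p * fst p))"
      by (rule continuous_on_compose2[OF cD]) (auto intro!: continuous_intros)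
    then show ?thesis by (auto simp: case_prod_beta intro!: continuous_intros)
  qed
  have "(K k has_real_derivative K (Suc k) x) (at x)" for k x
  proof -
    have "((\<lambda>x. integral (cbox 0 1) (\<lambda>s. (1 - s) * s ^ k * D (k + 2) (s * x))) has_real_derivative
        integral (cbox 0 1) (\<lambda>s. (1 - s) * s ^ Suc k * D (Suc k + 2) (s * x))) (at x within UNIV)"
    proof (rule leibniz_rule_field_derivative)
      fix x :: real and s :: real
      assume "s \<in> cbox 0 1"
      have "((\<lambda>x. (1 - s) * s ^ k * D (k + 2) (s * x)) has_real_derivative
          (1 - s) * s ^ k * (D (Suc (k + 2)) (s * x) * s)) (at x)"
        by (intro DERIV_cmult DERIV_chain2[OF D]) (auto intro!: derivative_eq_intros)
      then show "((\<lambda>x. (1 - s) * s ^ k * D (k + 2) (s * x)) has_real_derivative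
          (1 - s) * s ^ Suc k * D (Suc k + 2) (s * x)) (at x within UNIV)"
        by (simp add: algebra_simps)
    next
      fix x :: real
      show "(\<lambda>s. (1 - s) * s ^ k * D (k + 2) (s * x)) integrable_on cbox 0 1"
      proof -
        have "continuous_on {0..1} (\<lambda>s. D (k+2) (s*x))"
          by (rule continuous_on_compose2[OF cD]) (auto intro!: continuous_intros)
        then show ?thesis by (auto simp: cbox_interval intro!: integrable_continuous_real continuous_intros)
      qed
    next
      show "continuous_on (UNIV \<times> cbox 0 1) (\<lambda>(x, s). (1 - s) * s ^ Suc k * D (Suc k + 2) (s * x))"
        using cont[of "Suc k" "Suc k + 2"] by simp
    qed auto
    then show ?thesis unfolding K_def by simp
  qed
  moreover have "D 0 t = t^2 * K 0 t" for t
  proof -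
    define \<phi> where "\<phi> s = D 0 (s * t) + (1 - s) * t * D 1 (s * t)" for s
    have "((\<lambda>s. t^2 * ((1 - s) * s ^ 0 * D (0 + 2) (s * t))) has_integral (\<phi> 1 - \<phi> 0)) {0..1}"
    proof (rule fundamental_theorem_of_calculus)
      fix s :: real assume "s \<in> {0..1}"
      have "(\<phi> has_real_derivative (D 1 (s * t) * t + ((- 1) * t * D 1 (s * t) + (1 - s) * t * (D 2 (s * t) * t)))) (at s)"
      proof -
        have ch: "((\<lambda>z. D j (z * t)) has_real_derivative D (Suc j) (s * t) * t) (at s)" for j
        proof -
          have "((\<lambda>z. z * t) has_real_derivative t) (at s)" by (auto intro!: derivative_eq_intros)
          from DERIV_chain2[OF D this] show ?thesis .
        qed
        have ch1: "((\<lambda>z. D 1 (z * t)) has_real_derivative D 2 (s * t) * t) (at s)"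
          using ch[of 1] by (simp add: numeral_2_eq_2)
        show ?thesis unfolding \<phi>_def
          by (intro derivative_intros) (auto intro!: derivative_eq_intros ch[of 0, simplified] ch1[unfolded One_nat_def])
      qed
      then show "(\<phi> has_vector_derivative t^2 * ((1 - s) * s ^ 0 * D (0 + 2) (s * t))) (at s within {0..1})"
        by (auto simp: has_real_derivative_iff_has_vector_derivative[symmetric] power2_eq_square algebra_simps numeral_2_eq_2
            intro: has_field_derivative_at_within)
    qed simp
    then have "integral {0..1} (\<lambda>s. t^2 * ((1 - s) * s ^ 0 * D (0 + 2) (s * t))) = \<phi> 1 - \<phi> 0"
      by (rule integral_unique)
    also have "\<phi> 1 - \<phi> 0 = D 0 t" using z0 z1 by (simp add: \<phi>_def)
    finally have "integral {0..1} (\<lambda>s. t^2 * ((1 - s) * s ^ 0 * D (0 + 2) (s * t))) = D 0 t" .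
    then show ?thesis unfolding K_def integral_mult_right by simp
  qed
  ultimately show ?thesis by blast
qed

lemma interval_ext:
  assumes l: "l > 0" and sm: "smooth_on_interval g 0 l"
    and dg: "(g has_real_derivative d) (at 0 within {0..l})"
  shows "\<exists>E. (\<forall>k x. (E k has_real_derivative E (Suc k) x) (at x)) \<and> (\<forall>x\<in>{0..l}. E 0 x = g x) \<and> E 1 0 = d"
proof -
  obtain D where D0: "\<forall>x\<in>{0..l}. D 0 x = g x"
    and D: "\<forall>k. \<forall>x\<in>{0..l}. (D k has_real_derivative D (Suc k) x) (at x within {0..l})"
    using sm unfolding smooth_on_interval_def by blast
  obtain E where E: "\<And>k x. (E k has_real_derivative E (Suc k) x) (at x)"
    and ED: "\<And>k x. x \<in> {0..l} \<Longrightarrow> E k x = D k x"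
    using extend_interval[of 0 l D] l D by blast
  have Eg: "\<forall>x\<in>{0..l}. E 0 x = g x" using ED D0 by auto
  have "(g has_real_derivative E 1 0) (at 0 within {0..l})"
  proof (rule has_field_derivative_transform_within[of "E 0" _ _ _ 1])
    show "(E 0 has_real_derivative E 1 0) (at 0 within {0..l})"
      using E[of 0 0] by (auto intro: has_field_derivative_at_within)
  qed (use l Eg in auto)
  moreover have "at (0::real) within {0..l} \<noteq> bot"
    using l by (simp add: at_within_Icc_at_right)
  ultimately have "E 1 0 = d" using dg by (intro has_field_derivative_unique) auto
  then show ?thesis using E Eg by blast
qed

lemma smooth1_I: "(\<And>(k::nat) x. (D k has_real_derivative D (Suc k) x) (at x)) \<Longrightarrow> smooth1 (D 0)"
  unfolding smooth1_def by blast

lemma smooth1_id: "smooth1 (\<lambda>t. t)"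
proof -
  define D where "D (k::nat) t = (if k = 0 then t else if k = 1 then 1 else (0::real))" for k t
  have "(D k has_real_derivative D (Suc k) x) (at x)" for k x
    unfolding D_def by (cases k) (auto intro!: derivative_eq_intros)
  then have "smooth1 (D 0)" by (rule smooth1_I)
  moreover have "D 0 = (\<lambda>t. t)" by (rule ext) (simp add: D_def)
  ultimately show ?thesis by simp
qed

theorem lemma4p11:
  fixes l0 :: real and l :: "'n::finite \<Rightarrow> real"
    and f0 :: "real \<Rightarrow> real" and fs :: "'n \<Rightarrow> real \<Rightarrow> real"
    and d0 :: real and d :: "'n \<Rightarrow> real"
  assumes "CARD('n) \<ge> 2"
    and "l0 > 0" and "\<And>j. l j > 0"
    and "smooth_on_interval f0 0 l0" and "\<And>j. smooth_on_interval (fs j) 0 (l j)"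
    and "\<And>j. fs j 0 = f0 0"
    and "(f0 has_real_derivative d0) (at 0 within {0..l0})"
    and "\<And>j. (fs j has_real_derivative d j) (at 0 within {0..l j})"
    and "d0 + (\<Sum>j\<in>UNIV. d j) = 0"
  shows "\<exists>f :: real ^ 'n \<Rightarrow> real. smooth_fun f \<and>
           (\<forall>t\<in>{0..l0}. f (t *\<^sub>R (- (\<Sum>j\<in>UNIV. axis j 1))) = f0 t) \<and>
           (\<forall>j. \<forall>t\<in>{0..l j}. f (t *\<^sub>R axis j 1) = fs j t)"
proof -
  define n where "n = CARD('n)"
  obtain E0 where E0: "\<And>k x. (E0 k has_real_derivative E0 (Suc k) x) (at x)"
      "\<forall>x\<in>{0..l0}. E0 0 x = f0 x" "E0 1 0 = d0"
    using interval_ext[OF assms(2) assms(4) assms(7)] by blast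
  have "\<forall>j. \<exists>E. (\<forall>k x. (E k has_real_derivative E (Suc k) x) (at x)) \<and> (\<forall>x\<in>{0..l j}. E 0 x = fs j x) \<and> E 1 0 = d j"
    using interval_ext assms(3,5,8) by blast
  then obtain Es where Es: "\<And>j k x. (Es j k has_real_derivative Es j (Suc k) x) (at x)"
      "\<And>j x. x \<in> {0..l j} \<Longrightarrow> Es j 0 x = fs j x" "\<And>j. Es j 1 0 = d j"
    by metis
  have Es0: "Es j 0 0 = f0 0" for j using Es(2)[of 0 j] assms(3)[of j] assms(6)[of j] by simp
  have E00: "E0 0 0 = f0 0" using E0(2) assms(2) by simp
  define DH where "DH k t = E0 k t - (\<Sum>j\<in>UNIV. (-1)^k * Es j k (-t)) + (if k = 0 then (real n - 1) * f0 0 else 0)" for k t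
  have refl: "((\<lambda>t. (-1)^k * Es j k (-t)) has_real_derivative (-1)^Suc k * Es j (Suc k) (-t)) (at t)" for j k t
  proof -
    have "((\<lambda>t::real. -t) has_real_derivative -1) (at t)" by (auto intro!: derivative_eq_intros)
    from DERIV_chain2[OF Es(1) this] have "((\<lambda>t. Es j k (-t)) has_real_derivative Es j (Suc k) (-t) * (-1)) (at t)" .
    from DERIV_cmult[OF this, of "(-1)^k"] show ?thesis by simp
  qed
  have DH: "(DH k has_real_derivative DH (Suc k) t) (at t)" for k t
  proof -
    have "((\<lambda>t. E0 k t - (\<Sum>j\<in>UNIV. (-1)^k * Es j k (-t)) + (if k = 0 then (real n - 1) * f0 0 else 0))
        has_real_derivative E0 (Suc k) t - (\<Sum>j\<in>UNIV. (-1)^Suc k * Es j (Suc k) (-t)) + 0) (at t)"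
      by (intro DERIV_add DERIV_diff E0(1) DERIV_sum refl DERIV_const)
    then show ?thesis unfolding DH_def by simp
  qed
  have DH0: "DH 0 0 = 0"
    unfolding DH_def using E00 Es0 by (simp add: n_def algebra_simps)
  have DH1: "DH 1 0 = 0"
    unfolding DH_def using E0(3) Es(3) assms(9) by (simp add: sum_negf)
  obtain DK where DK: "\<And>k x. (DK k has_real_derivative DK (Suc k) x) (at x)" "\<And>t. DH 0 t = t^2 * DK 0 t"
    using division_lemma[of DH, OF DH DH0 DH1] by blast
  obtain j1 :: 'n where True by simp
  have "UNIV - {j1} \<noteq> {}"
  proof
    assume "UNIV - {j1} = {}"
    then have "(UNIV :: 'n set) = {j1}" by auto
    then have "CARD('n) = card {j1}" by (rule arg_cong[where f=card])
    then have "CARD('n) = 1" by simp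
    then show False using assms(1) by simp
  qed
  then obtain j2 :: 'n where "j2 \<in> UNIV - {j1}" by blast
  then have j12: "j1 \<noteq> j2" by auto
  define f where "f x = (\<Sum>j\<in>UNIV. Es j 0 (x $ j)) + (x $ j1 * x $ j2 * DK 0 (- (x $ j1)) + (- ((real n - 1) * f0 0)))"
    for x :: "real ^ 'n"
  have smooth: "smooth_fun f"
  proof -
    have s1: "smooth1 (Es j 0)" for j using Es(1) by (rule smooth1_I)
    have s2: "smooth1 (DK 0)" using DK(1) by (rule smooth1_I)
    have bl: "bounded_linear (\<lambda>x::real^'n. x $ j)" for j by (rule bounded_linear_vec_nth)
    have c: "smooth_fun (\<lambda>x::real^'n. x $ j)" for j using smooth1_comp_linear[OF smooth1_id bl] .
    have "smooth_fun (\<lambda>x::real^'n. DK 0 (- (x $ j1)))"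
      using smooth1_comp_linear[OF s2 bounded_linear_minus[OF bl]] .
    then show ?thesis unfolding f_def[abs_def]
      by (intro smooth_fun_add smooth_fun_sum smooth_fun_mult smooth_fun_const c
          smooth1_comp_linear[OF s1 bl]) auto
  qed
  have ray0: "f (t *\<^sub>R (- (\<Sum>j\<in>UNIV. axis j 1))) = f0 t" if t: "t \<in> {0..l0}" for t
  proof -
    have x: "(t *\<^sub>R (- (\<Sum>j\<in>UNIV. axis j 1)) :: real^'n) $ i = - t" for i
      by (simp add: axis_def)
    have "f (t *\<^sub>R (- (\<Sum>j\<in>UNIV. axis j 1))) = (\<Sum>j\<in>UNIV. Es j 0 (- t)) + (t^2 * DK 0 t - (real n - 1) * f0 0)"
      unfolding f_def x by (simp add: power2_eq_square)
    also have "\<dots> = E0 0 t" using DK(2)[of t] unfolding DH_def by simp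
    also have "\<dots> = f0 t" using E0(2) t by simp
    finally show ?thesis .
  qed
  have rayj: "f (t *\<^sub>R axis j 1) = fs j t" if t: "t \<in> {0..l j}" for j t
  proof -
    have x: "(t *\<^sub>R axis j 1 :: real^'n) $ i = (if i = j then t else 0)" for i
      by (simp add: axis_def)
    have p: "(t *\<^sub>R axis j 1 :: real^'n) $ j1 * (t *\<^sub>R axis j 1 :: real^'n) $ j2 = 0"
      unfolding x using j12 by auto
    have "(\<Sum>i\<in>UNIV. Es i 0 ((t *\<^sub>R axis j 1 :: real^'n) $ i)) = Es j 0 t + (\<Sum>i\<in>UNIV - {j}. Es i 0 0)"
      unfolding x by (subst sum.remove[of UNIV j]) auto
    also have "(\<Sum>i\<in>UNIV - {j}. Es i 0 0) = (real n - 1) * f0 0"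
      using Es0 assms(1) by (simp add: n_def card_Diff_singleton of_nat_diff)
    finally show ?thesis unfolding f_def p using Es(2)[OF t] by simp
  qed
  show ?thesis using smooth ray0 rayj by blast
qed

end
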